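(* Let $\sigma$ be a $C_0$-nice measure on $\mathbb{C}$ with $0\notin\operatorname{supp}(\sigma)$, let $z\notin\operatorname{supp}(\sigma)$ and set $d_0=\operatorname{dist}(\{0,z\},\operatorname{supp}(\sigma))$. Then $$\int_{\mathbb{C}}\Big|\frac{1}{z-\xi}+\frac1\xi\Big|\,d\sigma(\xi)\le\frac{C(C_0)|z|}{d_0},$$ where $C(C_0)$ depends only on $C_0$.
   Context: $\sigma$ is a positive Borel measure; it is $C_0$-nice if $\sigma(B(w,r))\le C_0r$ for every open disc $B(w,r)$. *)

theory Defs
  imports "HOL-Analysis.Analysis"
begin

definition nice_measure :: "real \<Rightarrow> complex measure \<Rightarrow> bool" where
  "nice_measure C0 \<sigma> \<longleftrightarrow> sets \<sigma> = sets borel \<and>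
     (\<forall>w r. r > 0 \<longrightarrow> emeasure \<sigma> (ball w r) \<le> ennreal (C0 * r))"

definition measure_supp :: "complex measure \<Rightarrow> complex set" where
  "measure_supp \<sigma> = {x. \<forall>r>0. emeasure \<sigma> (ball x r) > 0}"

end

theory Submission imports Defs begin

lemma zero_cover:
  fixes \<sigma> :: "complex measure"
  assumes sets: "sets \<sigma> = sets borel" and U: "U \<in> sets \<sigma>"
    and loc: "\<And>x. x \<in> U \<Longrightarrow> \<exists>r>0. emeasure \<sigma> (ball x r) = 0"
  shows "emeasure \<sigma> U = 0"
proof -
  define F where "F = {ball x r |x r. r > 0 \<and> emeasure \<sigma> (ball x r) = 0}"
  have "\<And>S. S \<in> F \<Longrightarrow> open S" unfolding F_def by blast
  then obtain F' where F': "F' \<subseteq> F" "countable F'" "\<Union>F' = \<Union>F" by (rule Lindelof)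
  have "(\<Union>S\<in>F'. id S) \<in> null_sets \<sigma>"
  proof (rule null_sets_UN'[OF F'(2)])
    fix S assume "S \<in> F'"
    then have "S \<in> F" using F' by blast
    then obtain x r where S: "S = ball x r" "emeasure \<sigma> (ball x r) = 0" unfolding F_def by blast
    have "ball x r \<in> sets \<sigma>" using sets by simp
    then show "id S \<in> null_sets \<sigma>" using S by (simp add: null_sets_def)
  qed
  then have N: "\<Union>F \<in> null_sets \<sigma>" using F'(3) by simp
  have "U \<subseteq> \<Union>F"
  proof
    fix x assume "x \<in> U"
    then obtain r where "r > 0" "emeasure \<sigma> (ball x r) = 0" using loc by blast
    then have "ball x r \<in> F" unfolding F_def by blast
    moreover have "x \<in> ball x r" using \<open>r > 0\<close> by simp
    ultimately show "x \<in> \<Union>F" by blast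
  qed
  moreover have "\<Union>F \<in> sets \<sigma>" using N by (rule null_setsD2)
  ultimately have "emeasure \<sigma> U \<le> emeasure \<sigma> (\<Union>F)" by (rule emeasure_mono)
  then show ?thesis using null_setsD1[OF N] by simp
qed

lemma exists_dyadic:
  fixes d r :: real assumes "d > 0" "d \<le> r"
  shows "\<exists>k::nat. d * 2^k \<le> r \<and> r < d * 2^(Suc k)"
proof -
  obtain n :: nat where n: "r / d < 2 ^ n" using real_arch_pow[of 2 "r/d"] by auto
  have ex: "\<exists>n::nat. r < d * 2^n" using n assms by (auto simp: field_simps)
  define m where "m = (LEAST n::nat. r < d * 2^n)"
  have m: "r < d * 2^m" unfolding m_def by (rule LeastI_ex[OF ex])
  have "m \<noteq> 0"
  proof
    assume "m = 0" with m assms show False by simp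
  qed
  then obtain k where k: "m = Suc k" by (cases m) auto
  have "\<not> r < d * 2^k"
  proof
    assume "r < d * 2^k"
    then have "m \<le> k" unfolding m_def by (rule Least_le)
    then show False using k by simp
  qed
  then show ?thesis using m k by (intro exI[of _ k]) auto
qed

lemma inv_sq_bound:
  fixes \<sigma> :: "complex measure"
  assumes sets: "sets \<sigma> = sets borel" and C0: "C0 \<ge> 0"
    and nice: "\<And>w r. r > 0 \<Longrightarrow> emeasure \<sigma> (ball w r) \<le> ennreal (C0 * r)"
    and d: "d > 0" and zero: "emeasure \<sigma> (ball w d) = 0"
  shows "(\<integral>\<^sup>+ \<xi>. ennreal (1 / (norm (\<xi> - w))^2) \<partial>\<sigma>) \<le> ennreal (4 * C0 / d)"
proof -
  define c where "c = (\<lambda>j::nat. 1 / (d^2 * 4^j))"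
  define g where "g = (\<lambda>\<xi>. \<Sum>j. ennreal (c j) * indicator (ball w (d * 2^(Suc j))) \<xi>)"
  have ballm: "\<And>r. ball w r \<in> sets \<sigma>" using sets by simp
  have AE: "AE \<xi> in \<sigma>. \<xi> \<notin> ball w d"
    by (rule AE_I'[of "ball w d"]) (use zero ballm in \<open>auto simp: null_sets_def\<close>)
  have "AE \<xi> in \<sigma>. ennreal (1 / (norm (\<xi> - w))^2) \<le> g \<xi>"
    using AE
  proof eventually_elim
    case (elim \<xi>)
    then have dr: "d \<le> norm (\<xi> - w)" by (simp add: dist_norm norm_minus_commute)
    then obtain k where k: "d * 2^k \<le> norm (\<xi> - w)" "norm (\<xi> - w) < d * 2^(Suc k)"
      using exists_dyadic[OF d] by blast
    have "1 / (norm (\<xi> - w))^2 \<le> 1 / (d * 2^k)^2"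
    proof -
      have p1: "d * 2^k > 0" using d by simp
      then have p2: "norm (\<xi> - w) > 0" using k by linarith
      show ?thesis using k p1 p2 by (intro divide_left_mono power_mono mult_pos_pos) auto
    qed
    also have "\<dots> = c k"
    proof -
      have "(4::real)^k = (2^k)^2" by (induct k) (auto simp: power2_eq_square)
      then show ?thesis unfolding c_def by (simp add: power_mult_distrib)
    qed
    finally have lek: "1 / (norm (\<xi> - w))^2 \<le> c k" .
    have dw: "dist w \<xi> = norm (\<xi> - w)" by (simp add: dist_norm norm_minus_commute)
    have inball: "\<xi> \<in> ball w (d * 2^(Suc k))" unfolding mem_ball dw using k(2) .
    have ind: "ennreal (c k) * indicator (ball w (d * 2^(Suc k))) \<xi> = ennreal (c k)"
      using inball by simp
    have le: "ennreal (1 / (norm (\<xi> - w))^2) \<le> ennreal (c k) * indicator (ball w (d * 2^(Suc k))) \<xi>"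
      unfolding ind using lek by (rule ennreal_leI)
    also have "\<dots> \<le> g \<xi>" unfolding g_def
    proof -
      let ?f = "\<lambda>j. ennreal (c j) * indicator (ball w (d * 2^(Suc j))) \<xi>"
      have "?f k = sum ?f {k}" by (simp only: sum.insert_if[OF finite.emptyI] empty_iff if_False sum.empty add.right_neutral)
      also have "\<dots> \<le> suminf ?f" by (rule sum_le_suminf) auto
      finally show "?f k \<le> suminf ?f" .
    qed
    finally show ?case .
  qed
  then have "(\<integral>\<^sup>+ \<xi>. ennreal (1 / (norm (\<xi> - w))^2) \<partial>\<sigma>) \<le> integral\<^sup>N \<sigma> g"
    by (rule nn_integral_mono_AE)
  also have "integral\<^sup>N \<sigma> g = (\<Sum>j. ennreal (c j) * emeasure \<sigma> (ball w (d * 2^(Suc j))))"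
    
  proof -
    have mj: "\<And>j. (\<lambda>x. ennreal (c j) * indicator (ball w (d * 2^(Suc j))) x) \<in> borel_measurable \<sigma>"
      using ballm by simp
    have "(\<integral>\<^sup>+ x. (\<Sum>j. ennreal (c j) * indicator (ball w (d * 2^(Suc j))) x) \<partial>\<sigma>)
       = (\<Sum>j. integral\<^sup>N \<sigma> (\<lambda>x. ennreal (c j) * indicator (ball w (d * 2^(Suc j))) x))"
      by (rule nn_integral_suminf[OF mj])
    also have "\<dots> = (\<Sum>j. ennreal (c j) * emeasure \<sigma> (ball w (d * 2^(Suc j))))"
      by (rule suminf_cong, rule nn_integral_cmult_indicator, rule ballm)
    finally show ?thesis by (simp only: g_def)
  qed
  also have "\<dots> \<le> (\<Sum>j. ennreal (2 * C0 / d * (1/2)^j))"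
  proof (intro suminf_le)
    fix j
    have "ennreal (c j) * emeasure \<sigma> (ball w (d * 2^(Suc j))) \<le> ennreal (c j) * ennreal (C0 * (d * 2^(Suc j)))"
      using nice[of "d * 2^(Suc j)" w] d by (intro mult_left_mono) auto
    also have "\<dots> = ennreal (c j * (C0 * (d * 2^(Suc j))))"
      by (rule ennreal_mult[symmetric]) (use C0 d in \<open>auto simp: c_def\<close>)
    also have "c j * (C0 * (d * 2^(Suc j))) = 2 * C0 / d * (1/2)^j"
    proof -
      have h4: "(4::real)^j = 2^j * 2^j" by (induct j) auto
      show ?thesis using d by (simp add: c_def h4 power_one_over power2_eq_square divide_simps)
    qed
    finally show "ennreal (c j) * emeasure \<sigma> (ball w (d * 2^(Suc j))) \<le> ennreal (2 * C0 / d * (1/2)^j)" .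
  qed auto
  also have "(\<Sum>j. ennreal (2 * C0 / d * (1/2)^j)) = ennreal (2 * C0 / d * (1 / (1 - 1/2)))"
    using C0 d by (intro suminf_ennreal_eq sums_mult geometric_sums) auto
  also have "2 * C0 / d * (1 / (1 - 1/2)) = 4 * C0 / d" by simp
  finally show ?thesis .
qed


lemma not_supp_ball:
  assumes "x \<notin> measure_supp \<sigma>"
  shows "\<exists>r>0. emeasure \<sigma> (ball x r) = 0"
proof -
  have "\<not> (\<forall>r>0. emeasure \<sigma> (ball x r) > 0)" using assms unfolding measure_supp_def by blast
  then obtain r where "r > 0" "\<not> emeasure \<sigma> (ball x r) > 0" by blast
  then show ?thesis using not_gr_zero by blast
qed

lemma supp_closed:
  fixes \<sigma> :: "complex measure"
  assumes sets: "sets \<sigma> = sets borel"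
  shows "closed (measure_supp \<sigma>)"
proof -
  have "open (- measure_supp \<sigma>)"
  proof (rule openI)
    fix x assume "x \<in> - measure_supp \<sigma>"
    then have "x \<notin> measure_supp \<sigma>" by blast
    then obtain r where r: "r > 0" "emeasure \<sigma> (ball x r) = 0"
      using not_supp_ball by blast
    have "ball x r \<subseteq> - measure_supp \<sigma>"
    proof
      fix y assume y: "y \<in> ball x r"
      have sub: "ball y (r - dist x y) \<subseteq> ball x r"
      proof
        fix u assume "u \<in> ball y (r - dist x y)"
        then have "dist y u < r - dist x y" by simp
        then have "dist x u < r" using dist_triangle[of x u y] by linarith
        then show "u \<in> ball x r" by simp
      qed
      have bm: "ball x r \<in> sets \<sigma>" using sets by simp
      have "emeasure \<sigma> (ball y (r - dist x y)) \<le> emeasure \<sigma> (ball x r)"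
        by (rule emeasure_mono[OF sub bm])
      then have z0: "emeasure \<sigma> (ball y (r - dist x y)) = 0" using r(2) by simp
      have pos: "r - dist x y > 0" using y by simp
      show "y \<in> - measure_supp \<sigma>"
      proof
        assume "y \<in> measure_supp \<sigma>"
        then have "emeasure \<sigma> (ball y (r - dist x y)) > 0"
          using pos unfolding measure_supp_def by blast
        then show False using z0 by simp
      qed
    qed
    then show "\<exists>e>0. ball x e \<subseteq> - measure_supp \<sigma>" using r(1) by blast
  qed
  then show ?thesis by (simp only: closed_def)
qed

lemma pointwise:
  fixes z \<xi> :: complex
  assumes "\<xi> \<noteq> 0" "\<xi> \<noteq> z"
  shows "norm (1 / (z - \<xi>) + 1 / \<xi>) \<le> norm z / 2 * (1 / (norm (\<xi> - z))^2 + 1 / (norm (\<xi> - 0))^2)"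
proof -
  have "1 / (z - \<xi>) + 1 / \<xi> = z / ((z - \<xi>) * \<xi>)"
    using assms by (simp add: field_simps)
  then have e: "norm (1 / (z - \<xi>) + 1 / \<xi>) = norm z * (1 / (norm (z - \<xi>) * norm \<xi>))"
    by (simp add: norm_divide norm_mult)
  define a where "a = 1 / norm (z - \<xi>)"
  define b where "b = 1 / norm \<xi>"
  have ab: "a * b \<le> (a^2 + b^2) / 2" using sum_squares_ge_zero[of "a - b" 0]
    by (simp add: power2_eq_square algebra_simps)
  have h1: "1 / (norm (z - \<xi>) * norm \<xi>) = a * b" unfolding a_def b_def by simp
  have h2: "(a^2 + b^2) / 2 = (1 / (norm (\<xi> - z))^2 + 1 / (norm (\<xi> - 0))^2) / 2"
    unfolding a_def b_def power_one_over by (simp add: norm_minus_commute[of z \<xi>])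
  have h: "1 / (norm (z - \<xi>) * norm \<xi>) \<le> (1 / (norm (\<xi> - z))^2 + 1 / (norm (\<xi> - 0))^2) / 2"
    using ab unfolding h1 h2 .
  have "norm (1 / (z - \<xi>) + 1 / \<xi>) \<le> norm z * ((1 / (norm (\<xi> - z))^2 + 1 / (norm (\<xi> - 0))^2) / 2)"
    unfolding e by (rule mult_left_mono[OF h norm_ge_zero])
  then show ?thesis by simp
qed

theorem mainTheorem7:
  fixes C0 :: real
  shows "\<exists>C::real. \<forall>(\<sigma>::complex measure) (z::complex).
           nice_measure C0 \<sigma> \<longrightarrow> 0 \<notin> measure_supp \<sigma> \<longrightarrow> z \<notin> measure_supp \<sigma> \<longrightarrow>
           (\<integral>\<^sup>+ \<xi>. ennreal (norm (1 / (z - \<xi>) + 1 / \<xi>)) \<partial>\<sigma>)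
             \<le> ennreal (C * norm z / setdist {0, z} (measure_supp \<sigma>))"
proof (intro exI[of _ "4 * \<bar>C0\<bar>"] allI impI)
  fix \<sigma> :: "complex measure" and z :: complex
  assume nm: "nice_measure C0 \<sigma>" and n0: "0 \<notin> measure_supp \<sigma>" and nz: "z \<notin> measure_supp \<sigma>"
  have sets: "sets \<sigma> = sets borel" using nm by (simp add: nice_measure_def)
  have nice: "\<And>w r. r > 0 \<Longrightarrow> emeasure \<sigma> (ball w r) \<le> ennreal (\<bar>C0\<bar> * r)"
  proof -
    fix w :: complex and r :: real assume "r > 0"
    then have "emeasure \<sigma> (ball w r) \<le> ennreal (C0 * r)" using nm by (simp add: nice_measure_def)
    also have "\<dots> \<le> ennreal (\<bar>C0\<bar> * r)" using \<open>r > 0\<close> by (intro ennreal_leI mult_right_mono) auto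
    finally show "emeasure \<sigma> (ball w r) \<le> ennreal (\<bar>C0\<bar> * r)" .
  qed
  let ?S = "measure_supp \<sigma>"
  show "(\<integral>\<^sup>+ \<xi>. ennreal (norm (1 / (z - \<xi>) + 1 / \<xi>)) \<partial>\<sigma>)
             \<le> ennreal (4 * \<bar>C0\<bar> * norm z / setdist {0, z} ?S)"
  proof (cases "?S = {}")
    case True
    have "emeasure \<sigma> UNIV = 0"
    proof (rule zero_cover[OF sets])
      show "UNIV \<in> sets \<sigma>" using sets by simp
      fix x :: complex
      have "x \<notin> ?S" using True by blast
      then show "\<exists>r>0. emeasure \<sigma> (ball x r) = 0" by (rule not_supp_ball)
    qed
    moreover have sp: "space \<sigma> = UNIV" using sets_eq_imp_space_eq[OF sets] by simp
    ultimately have "UNIV \<in> null_sets \<sigma>" using sets by (simp add: null_sets_def)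
    then have "AE \<xi> in \<sigma>. False" by (rule AE_I') (use sp in auto)
    then have "AE \<xi> in \<sigma>. ennreal (norm (1 / (z - \<xi>) + 1 / \<xi>)) = 0"
      by (rule eventually_mono) simp
    then have "(\<integral>\<^sup>+ \<xi>. ennreal (norm (1 / (z - \<xi>) + 1 / \<xi>)) \<partial>\<sigma>) = (\<integral>\<^sup>+ \<xi>. 0 \<partial>\<sigma>)"
      by (rule nn_integral_cong_AE)
    then show ?thesis by simp
  next
    case False
    define d where "d = setdist {0, z} ?S"
    have "setdist {0, z} ?S \<noteq> 0"
      using setdist_eq_0_compact_closed[of "{0,z}" ?S] supp_closed[OF sets] False n0 nz by auto
    then have d: "d > 0" unfolding d_def using setdist_pos_le[of "{0,z}" ?S] by linarith
    have zb: "emeasure \<sigma> (ball w d) = 0" if w: "w \<in> {0, z}" for w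
    proof (rule zero_cover[OF sets])
      show "ball w d \<in> sets \<sigma>" using sets by simp
      fix x assume x: "x \<in> ball w d"
      have "x \<notin> ?S"
      proof
        assume "x \<in> ?S"
        then have "d \<le> dist w x" using setdist_le_dist[OF w] unfolding d_def by blast
        then show False using x by simp
      qed
      then show "\<exists>r>0. emeasure \<sigma> (ball x r) = 0" by (rule not_supp_ball)
    qed
    have zb0: "emeasure \<sigma> (ball 0 d) = 0" by (rule zb) simp
    have zbz: "emeasure \<sigma> (ball z d) = 0" by (rule zb) simp
    have I0: "(\<integral>\<^sup>+ \<xi>. ennreal (1 / (norm (\<xi> - 0))^2) \<partial>\<sigma>) \<le> ennreal (4 * \<bar>C0\<bar> / d)"
      by (rule inv_sq_bound[OF sets abs_ge_zero nice d zb0])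
    have Iz: "(\<integral>\<^sup>+ \<xi>. ennreal (1 / (norm (\<xi> - z))^2) \<partial>\<sigma>) \<le> ennreal (4 * \<bar>C0\<bar> / d)"
      by (rule inv_sq_bound[OF sets abs_ge_zero nice d zbz])
    have ballsm: "ball 0 d \<union> ball z d \<in> null_sets \<sigma>"
      using zb0 zbz sets by (intro null_sets.Un) (auto simp: null_sets_def)
    have AE: "AE \<xi> in \<sigma>. \<xi> \<notin> ball 0 d \<union> ball z d"
      by (rule AE_I'[OF ballsm]) auto
    have "AE \<xi> in \<sigma>. ennreal (norm (1 / (z - \<xi>) + 1 / \<xi>)) \<le>
        ennreal (norm z / 2) * (ennreal (1 / (norm (\<xi> - z))^2) + ennreal (1 / (norm (\<xi> - 0))^2))"
      using AE
    proof eventually_elim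
      case (elim \<xi>)
      then have "\<xi> \<noteq> 0" "\<xi> \<noteq> z" using d by auto
      then have "norm (1 / (z - \<xi>) + 1 / \<xi>) \<le> norm z / 2 * (1 / (norm (\<xi> - z))^2 + 1 / (norm (\<xi> - 0))^2)"
        by (rule pointwise)
      then have "ennreal (norm (1 / (z - \<xi>) + 1 / \<xi>)) \<le> ennreal (norm z / 2 * (1 / (norm (\<xi> - z))^2 + 1 / (norm (\<xi> - 0))^2))"
        by (rule ennreal_leI)
      also have "\<dots> = ennreal (norm z / 2) * ennreal (1 / (norm (\<xi> - z))^2 + 1 / (norm (\<xi> - 0))^2)"
        by (rule ennreal_mult) auto
      also have "ennreal (1 / (norm (\<xi> - z))^2 + 1 / (norm (\<xi> - 0))^2) = ennreal (1 / (norm (\<xi> - z))^2) + ennreal (1 / (norm (\<xi> - 0))^2)"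
        by (rule ennreal_plus) auto
      finally show ?case .
    qed
    then have "(\<integral>\<^sup>+ \<xi>. ennreal (norm (1 / (z - \<xi>) + 1 / \<xi>)) \<partial>\<sigma>) \<le>
       (\<integral>\<^sup>+ \<xi>. ennreal (norm z / 2) * (ennreal (1 / (norm (\<xi> - z))^2) + ennreal (1 / (norm (\<xi> - 0))^2)) \<partial>\<sigma>)"
      by (rule nn_integral_mono_AE)
    also have "\<dots> = ennreal (norm z / 2) * ((\<integral>\<^sup>+ \<xi>. ennreal (1 / (norm (\<xi> - z))^2) \<partial>\<sigma>) + (\<integral>\<^sup>+ \<xi>. ennreal (1 / (norm (\<xi> - 0))^2) \<partial>\<sigma>))"
    proof -
      have eqm: "borel_measurable \<sigma> = borel_measurable borel"
        by (rule measurable_cong_sets[OF sets refl])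
      have m1: "(\<lambda>\<xi>. ennreal (1 / (norm (\<xi> - z))^2)) \<in> borel_measurable \<sigma>"
        unfolding eqm by measurable
      have m2: "(\<lambda>\<xi>. ennreal (1 / (norm (\<xi> - 0))^2)) \<in> borel_measurable \<sigma>"
        unfolding eqm by measurable
      have m12: "(\<lambda>\<xi>. ennreal (1 / (norm (\<xi> - z))^2) + ennreal (1 / (norm (\<xi> - 0))^2)) \<in> borel_measurable \<sigma>"
        by (rule borel_measurable_add[OF m1 m2])
      show ?thesis
        by (simp only: nn_integral_cmult[OF m12] nn_integral_add[OF m1 m2])
    qed
    also have "\<dots> \<le> ennreal (norm z / 2) * (ennreal (4 * \<bar>C0\<bar> / d) + ennreal (4 * \<bar>C0\<bar> / d))"
      using I0 Iz by (intro mult_left_mono add_mono) auto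
    also have "\<dots> = ennreal (norm z / 2) * ennreal (4 * \<bar>C0\<bar> / d + 4 * \<bar>C0\<bar> / d)"
      by (subst ennreal_plus) (use d in auto)
    also have "\<dots> = ennreal (norm z / 2 * (4 * \<bar>C0\<bar> / d + 4 * \<bar>C0\<bar> / d))"
      by (rule ennreal_mult[symmetric]) (use d in auto)
    also have "norm z / 2 * (4 * \<bar>C0\<bar> / d + 4 * \<bar>C0\<bar> / d) = 4 * \<bar>C0\<bar> * norm z / d"
      by (simp add: field_simps)
    finally show ?thesis unfolding d_def .
  qed
qed

end
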